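(* Let $\Lambda=G_{K,L}$ be the $K\times L$ open grid with $K,L\ge2$, with its hard-core energy landscape. There exists a path $\omega^*$ from $\mathbf e$ to $\mathbf o$ in $\mathcal X$ such that $\max_{\sigma\in\omega^*}H(\sigma)-H(\mathbf e)=\lceil K/2\rceil+1$.
   Context: Open grid $G_{K,L}$: sites $(v_1,v_2)$ with $0\le v_1\le L-1$, $0\le v_2\le K-1$; $v,w$ adjacent iff $|v_1-w_1|+|v_2-w_2|=1$. Even sites: $v_1+v_2$ even. State space $\mathcal X$ = set of $\sigma\in\{0,1\}^\Lambda$ with $\sigma(v)\sigma(w)=0$ for adjacent $v,w$; $H(\sigma)=-\sum_v\sigma(v)$. A path is a finite sequence of configurations in $\mathcal X$ in which consecutive configurations differ in exactly one site (or coincide). $\mathbf e$ (resp. $\mathbf o$) has particles exactly at the even (resp. odd) sites. *)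

theory Defs
  imports Complex_Main
begin

definition grid :: "nat \<Rightarrow> nat \<Rightarrow> (nat \<times> nat) set" where
  "grid K L = {(v1, v2). v1 < L \<and> v2 < K}"

definition adjacent :: "nat \<times> nat \<Rightarrow> nat \<times> nat \<Rightarrow> bool" where
  "adjacent v w \<longleftrightarrow>
     nat \<bar>int (fst v) - int (fst w)\<bar> + nat \<bar>int (snd v) - int (snd w)\<bar> = 1"

text \<open>A configuration sigma in {0,1}^Lambda is a boolean function on sites,
  required to be False outside Lambda (sigma v = True means a particle at v).\<close>
definition hc_states :: "nat \<Rightarrow> nat \<Rightarrow> (nat \<times> nat \<Rightarrow> bool) set" where
  "hc_states K L = {\<sigma>. (\<forall>v. v \<notin> grid K L \<longrightarrow> \<not> \<sigma> v) \<and>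
      (\<forall>v\<in>grid K L. \<forall>w\<in>grid K L. adjacent v w \<longrightarrow> \<not> (\<sigma> v \<and> \<sigma> w))}"

definition hc_H :: "nat \<Rightarrow> nat \<Rightarrow> (nat \<times> nat \<Rightarrow> bool) \<Rightarrow> int" where
  "hc_H K L \<sigma> = - (\<Sum>v\<in>grid K L. if \<sigma> v then 1 else 0)"

definition even_conf :: "nat \<Rightarrow> nat \<Rightarrow> nat \<times> nat \<Rightarrow> bool" where
  "even_conf K L v \<longleftrightarrow> v \<in> grid K L \<and> even (fst v + snd v)"

definition odd_conf :: "nat \<Rightarrow> nat \<Rightarrow> nat \<times> nat \<Rightarrow> bool" where
  "odd_conf K L v \<longleftrightarrow> v \<in> grid K L \<and> odd (fst v + snd v)"

definition hc_path :: "nat \<Rightarrow> nat \<Rightarrow> (nat \<times> nat \<Rightarrow> bool) list \<Rightarrow> bool" where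
  "hc_path K L \<omega> \<longleftrightarrow> \<omega> \<noteq> [] \<and> set \<omega> \<subseteq> hc_states K L \<and>
     (\<forall>i. Suc i < length \<omega> \<longrightarrow>
        card {v \<in> grid K L. (\<omega> ! i) v \<noteq> (\<omega> ! Suc i) v} \<le> 1)"

end

theory Submission
  imports Defs
begin

definition idx :: "nat \<Rightarrow> nat \<times> nat \<Rightarrow> nat" where
  "idx K v = fst v * K + snd v"

definition ev :: "nat \<Rightarrow> nat \<Rightarrow> bool" where
  "ev K t \<longleftrightarrow> even (t div K + t mod K)"

definition CC :: "nat \<Rightarrow> nat \<Rightarrow> nat \<Rightarrow> nat \<Rightarrow> bool" where
  "CC K p q t \<longleftrightarrow> (p \<le> t \<and> ev K t) \<or> (t < q \<and> \<not> ev K t)"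

definition conf :: "nat \<Rightarrow> nat \<Rightarrow> nat \<Rightarrow> nat \<Rightarrow> nat \<times> nat \<Rightarrow> bool" where
  "conf K L p q v \<longleftrightarrow> v \<in> grid K L \<and> CC K p q (idx K v)"

definition PP :: "nat \<Rightarrow> nat \<Rightarrow> nat" where
  "PP K n = (if n \<le> K then n else K + (n - K + 1) div 2)"

definition QQ :: "nat \<Rightarrow> nat \<Rightarrow> nat" where
  "QQ K n = (if n \<le> K then 0 else (n - K) div 2)"

definition Ec :: "nat \<Rightarrow> nat \<Rightarrow> nat \<Rightarrow> nat" where
  "Ec K L p = card {t. t < K*L \<and> ev K t \<and> t < p}"

definition Oc :: "nat \<Rightarrow> nat \<Rightarrow> nat \<Rightarrow> nat" where
  "Oc K L q = card {t. t < K*L \<and> \<not> ev K t \<and> t < q}"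

lemma finite_grid: "finite (grid K L)"
proof -
  have "grid K L \<subseteq> {..<L} \<times> {..<K}" by (auto simp: grid_def)
  then show ?thesis by (rule finite_subset) auto
qed

lemma idx_grid:
  assumes "v \<in> grid K L"
  shows "idx K v < K*L \<and> idx K v div K = fst v \<and> idx K v mod K = snd v"
proof -
  obtain a b where v: "v = (a,b)" "a < L" "b < K" using assms by (auto simp: grid_def)
  have "a*K + b < (a+1)*K" using v by simp
  also have "\<dots> \<le> L*K" using v by (intro mult_right_mono) auto
  finally have "a*K+b < K*L" by (simp add: mult.commute)
  then show ?thesis using v by (simp add: idx_def)
qed

lemma ev_grid: "v \<in> grid K L \<Longrightarrow> ev K (idx K v) \<longleftrightarrow> even (fst v + snd v)"
  using idx_grid[of v K L] by (simp add: ev_def)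

lemma card_transfer:
  assumes "K > 0"
  shows "card {v \<in> grid K L. S (idx K v)} = card {t. t < K*L \<and> S t}"
proof -
  have inj: "inj_on (idx K) {v \<in> grid K L. S (idx K v)}"
  proof (rule inj_onI)
    fix v w assume "v \<in> {v \<in> grid K L. S (idx K v)}" "w \<in> {v \<in> grid K L. S (idx K v)}"
      "idx K v = idx K w"
    then show "v = w" using idx_grid[of v K L] idx_grid[of w K L] by (metis prod.expand CollectD)
  qed
  have "idx K ` {v \<in> grid K L. S (idx K v)} = {t. t < K*L \<and> S t}"
  proof
    show "idx K ` {v \<in> grid K L. S (idx K v)} \<subseteq> {t. t < K*L \<and> S t}"
      using idx_grid by auto
  next
    show "{t. t < K*L \<and> S t} \<subseteq> idx K ` {v \<in> grid K L. S (idx K v)}"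
    proof
      fix t assume t: "t \<in> {t. t < K*L \<and> S t}"
      have g: "(t div K, t mod K) \<in> grid K L"
        using t assms by (auto simp: grid_def less_mult_imp_div_less mult.commute)
      have "idx K (t div K, t mod K) = t" by (simp add: idx_def)
      then show "t \<in> idx K ` {v \<in> grid K L. S (idx K v)}" using g t
        by (metis (mono_tags, lifting) CollectD CollectI image_eqI)
    qed
  qed
  then show ?thesis using card_image[OF inj] by simp
qed

lemma H_card: "hc_H K L \<sigma> = - int (card {v \<in> grid K L. \<sigma> v})"
proof -
  have "(\<Sum>v\<in>grid K L. if \<sigma> v then 1 else 0) = (\<Sum>v\<in>{v \<in> grid K L. \<sigma> v}. (1::int))"
    by (subst sum.inter_filter[OF finite_grid]) simp
  then show ?thesis by (simp add: hc_H_def)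
qed

lemma H_conf:
  assumes "K > 0"
  shows "hc_H K L (conf K L p q) = - int (card {t. t < K*L \<and> CC K p q t})"
proof -
  have "{v \<in> grid K L. conf K L p q v} = {v \<in> grid K L. CC K p q (idx K v)}"
    by (auto simp: conf_def)
  then show ?thesis using H_card card_transfer[OF assms] by metis
qed

lemma adj:
  assumes "adjacent v w" "K > 0"
  shows "(even (fst v + snd v) \<longleftrightarrow> \<not> even (fst w + snd w)) \<and>
         idx K v \<le> idx K w + K \<and> idx K w \<le> idx K v + K"
proof -
  obtain a b c d where vw: "v = (a,b)" "w = (c,d)" by fastforce
  have "((a = c+1 \<or> c = a+1) \<and> b = d) \<or> (a = c \<and> (b = d+1 \<or> d = b+1))"
    using assms(1) vw unfolding adjacent_def by auto
  then show ?thesis using vw assms(2) by (auto simp: idx_def algebra_simps)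
qed

lemma conf_valid:
  assumes "K > 0" "q = 0 \<or> q + K \<le> p"
  shows "conf K L p q \<in> hc_states K L"
  unfolding hc_states_def
proof (intro CollectI conjI allI impI ballI)
  fix v assume "v \<notin> grid K L" then show "\<not> conf K L p q v" by (simp add: conf_def)
next
  fix v w assume v: "v \<in> grid K L" and w: "w \<in> grid K L" and a: "adjacent v w"
  have A: "(ev K (idx K v) \<longleftrightarrow> \<not> ev K (idx K w)) \<and>
         idx K v \<le> idx K w + K \<and> idx K w \<le> idx K v + K"
    using adj[OF a assms(1)] ev_grid[OF v] ev_grid[OF w] by simp
  show "\<not> (conf K L p q v \<and> conf K L p q w)"
    using A assms(2) unfolding conf_def CC_def by auto
qed

lemma step_card:
  assumes "(p' = Suc p \<and> q' = q) \<or> (p' = p \<and> q' = Suc q)"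
  shows "card {v \<in> grid K L. conf K L p q v \<noteq> conf K L p' q' v} \<le> 1"
proof -
  obtain s where s: "{v \<in> grid K L. conf K L p q v \<noteq> conf K L p' q' v} \<subseteq> {v \<in> grid K L. idx K v = s}"
  proof (cases "p' = Suc p \<and> q' = q")
    case True
    then show ?thesis by (intro that[of p]) (auto simp: conf_def CC_def)
  next
    case False
    then have "p' = p \<and> q' = Suc q" using assms by auto
    then show ?thesis by (intro that[of q]) (auto simp: conf_def CC_def)
  qed
  have "{v \<in> grid K L. idx K v = s} \<subseteq> {(s div K, s mod K)}"
  proof
    fix v assume "v \<in> {v \<in> grid K L. idx K v = s}"
    then show "v \<in> {(s div K, s mod K)}" using idx_grid[of v K L] by (metis (mono_tags) CollectD prod.collapse singletonI)
  qed
  then have "card {v \<in> grid K L. conf K L p q v \<noteq> conf K L p' q' v} \<le> card {(s div K, s mod K)}"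
    using s by (intro card_mono) auto
  then show ?thesis by simp
qed

lemma PQ_step: "(PP K (Suc n) = Suc (PP K n) \<and> QQ K (Suc n) = QQ K n) \<or>
                (PP K (Suc n) = PP K n \<and> QQ K (Suc n) = Suc (QQ K n))"
proof (cases "n < K")
  case True then show ?thesis by (simp add: PP_def QQ_def)
next
  case False
  then obtain m where m: "n = K + m" using le_Suc_ex not_less by blast
  show ?thesis
  proof (cases "even m")
    case True then show ?thesis using m by (auto simp: PP_def QQ_def Suc_diff_le)
  next
    case False then show ?thesis using m by (auto simp: PP_def QQ_def Suc_diff_le intro: odd_pos)
  qed
qed

lemma card_even_below: "card {t. t < n \<and> even t} = (n + 1) div 2"
proof (induction n)
  case 0 then show ?case by simp
next
  case (Suc n)
  show ?case
  proof (cases "even n")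
    case True
    have "{t. t < Suc n \<and> even t} = insert n {t. t < n \<and> even t}" using True by auto
    then show ?thesis using Suc True by simp
  next
    case False
    have "{t. t < Suc n \<and> even t} = {t. t < n \<and> even t}" using False less_Suc_eq by auto
    then show ?thesis using Suc False by simp
  qed
qed

lemma Ec_K:
  assumes "K > 0" "L > 0"
  shows "Ec K L K = (K + 1) div 2"
proof -
  have "K \<le> K*L" using assms by simp
  then have "{t. t < K*L \<and> ev K t \<and> t < K} = {t. t < K \<and> even t}"
    by (auto simp: ev_def intro: less_le_trans)
  then show ?thesis by (simp add: Ec_def card_even_below)
qed

lemma ev_shift: "K > 0 \<Longrightarrow> ev K (s + K) \<longleftrightarrow> \<not> ev K s"
  by (simp add: ev_def)

lemma Ec_shift:
  assumes "K > 0"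
  shows "Ec K L (K + a) \<le> Ec K L K + Oc K L a"
proof -
  have sub: "{t. t < K*L \<and> ev K t \<and> t < K + a} \<subseteq>
     {t. t < K*L \<and> ev K t \<and> t < K} \<union> (\<lambda>t. t + K) ` {t. t < K*L \<and> \<not> ev K t \<and> t < a}"
  proof
    fix t assume t: "t \<in> {t. t < K*L \<and> ev K t \<and> t < K + a}"
    show "t \<in> {t. t < K*L \<and> ev K t \<and> t < K} \<union> (\<lambda>t. t + K) ` {t. t < K*L \<and> \<not> ev K t \<and> t < a}"
    proof (cases "t < K")
      case True then show ?thesis using t by auto
    next
      case False
      then have e: "t = (t - K) + K" by simp
      have "\<not> ev K (t - K)" using t ev_shift[OF assms, of "t - K"] e by auto
      then have "t - K \<in> {t. t < K*L \<and> \<not> ev K t \<and> t < a}" using t False by auto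
      then show ?thesis using e by blast
    qed
  qed
  have "Ec K L (K + a) \<le> card ({t. t < K*L \<and> ev K t \<and> t < K} \<union> (\<lambda>t. t + K) ` {t. t < K*L \<and> \<not> ev K t \<and> t < a})"
    unfolding Ec_def by (rule card_mono[OF _ sub]) auto
  also have "\<dots> \<le> card {t. t < K*L \<and> ev K t \<and> t < K} + card ((\<lambda>t. t + K) ` {t. t < K*L \<and> \<not> ev K t \<and> t < a})"
    by (rule card_Un_le)
  also have "\<dots> \<le> Ec K L K + Oc K L a"
    unfolding Ec_def Oc_def using card_image_le[of "{t. t < K*L \<and> \<not> ev K t \<and> t < a}" "\<lambda>t. t + K"]
    by auto
  finally show ?thesis .
qed

lemma Oc_step:
  assumes "a \<le> Suc b"
  shows "Oc K L a \<le> Oc K L b + 1"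
proof -
  have "{t. t < K*L \<and> \<not> ev K t \<and> t < a} \<subseteq> insert b {t. t < K*L \<and> \<not> ev K t \<and> t < b}"
    using assms by auto
  then have "Oc K L a \<le> card (insert b {t. t < K*L \<and> \<not> ev K t \<and> t < b})"
    unfolding Oc_def by (intro card_mono) auto
  also have "\<dots> \<le> Oc K L b + 1" unfolding Oc_def by (simp add: card_insert_le_m1 card_insert_if)
  finally show ?thesis .
qed

lemma Ec_mono: "p \<le> p' \<Longrightarrow> Ec K L p \<le> Ec K L p'"
  unfolding Ec_def by (intro card_mono) auto

lemma diff_decomp:
  "int (card {t. t < K*L \<and> CC K 0 0 t}) - int (card {t. t < K*L \<and> CC K p q t})
     = int (Ec K L p) - int (Oc K L q)"
proof -
  have 1: "{t. t < K*L \<and> CC K 0 0 t} = {t. t < K*L \<and> ev K t \<and> t < p} \<union> {t. t < K*L \<and> ev K t \<and> p \<le> t}"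
    by (auto simp: CC_def)
  have 2: "{t. t < K*L \<and> CC K p q t} = {t. t < K*L \<and> ev K t \<and> p \<le> t} \<union> {t. t < K*L \<and> \<not> ev K t \<and> t < q}"
    by (auto simp: CC_def)
  have c1: "card {t. t < K*L \<and> CC K 0 0 t} = Ec K L p + card {t. t < K*L \<and> ev K t \<and> p \<le> t}"
    unfolding 1 Ec_def by (subst card_Un_disjoint) auto
  have c2: "card {t. t < K*L \<and> CC K p q t} = card {t. t < K*L \<and> ev K t \<and> p \<le> t} + Oc K L q"
    unfolding 2 Oc_def by (subst card_Un_disjoint) auto
  show ?thesis using c1 c2 by simp
qed

lemma ceil_half: "\<lceil>real K / 2\<rceil> = int ((K + 1) div 2)"
proof (cases "even K")
  case True
  then obtain m where "K = 2*m" by blast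
  then show ?thesis by simp
next
  case False
  then obtain m where m: "K = 2*m+1" using oddE by blast
  have "real K / 2 = real m + 1/2" using m by simp
  then have "\<lceil>real K / 2\<rceil> = int m + 1" by (simp add: ceiling_unique)
  then show ?thesis using m by simp
qed

theorem proposition5p10:
  fixes K L :: nat
  assumes "K \<ge> 2" and "L \<ge> 2"
  shows "\<exists>\<omega>. hc_path K L \<omega> \<and> hd \<omega> = even_conf K L \<and> last \<omega> = odd_conf K L \<and>
           Max (hc_H K L ` set \<omega>) - hc_H K L (even_conf K L) = \<lceil>real K / 2\<rceil> + 1"
proof -
  have K0: "K > 0" and L0: "L > 0" using assms by auto
  define Nm where "Nm = K + 2*K*L"
  define \<omega> where "\<omega> = map (\<lambda>n. conf K L (PP K n) (QQ K n)) [0..<Suc Nm]"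
  have len: "length \<omega> = Suc Nm" by (simp add: \<omega>_def)
  have nth: "\<And>i. i < Suc Nm \<Longrightarrow> \<omega> ! i = conf K L (PP K i) (QQ K i)"
    by (simp add: \<omega>_def del: upt_Suc)
  have setw: "set \<omega> = (\<lambda>n. conf K L (PP K n) (QQ K n)) ` {..Nm}"
    by (auto simp: \<omega>_def atLeast0AtMost[symmetric] atLeastLessThanSuc_atLeastAtMost simp del: upt_Suc)
  have e_eq: "even_conf K L = conf K L 0 0"
    by (rule ext) (auto simp: even_conf_def conf_def CC_def ev_grid)
  have o_eq: "odd_conf K L = conf K L (K + K*L) (K*L)"
  proof (rule ext)
    fix v show "odd_conf K L v = conf K L (K + K*L) (K*L) v"
      using idx_grid[of v K L] ev_grid[of v K L]
      by (auto simp: odd_conf_def conf_def CC_def)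
  qed
  have hd: "hd \<omega> = even_conf K L"
  proof -
    have "hd \<omega> = \<omega> ! 0" using len by (intro hd_conv_nth) auto
    then show ?thesis using nth[of 0] e_eq by (simp add: PP_def QQ_def)
  qed
  have lastw: "last \<omega> = odd_conf K L"
  proof -
    have ne: "\<omega> \<noteq> []" using len by auto
    have "last \<omega> = \<omega> ! Nm" using len by (simp add: last_conv_nth[OF ne])
    also have "\<dots> = conf K L (PP K Nm) (QQ K Nm)" using nth by simp
    also have "PP K Nm = K + K*L" using L0 K0 by (simp add: PP_def Nm_def)
    also have "QQ K Nm = K*L" using L0 K0 by (simp add: QQ_def Nm_def)
    finally show ?thesis using o_eq by simp
  qed
  have valid: "\<And>n. QQ K n = 0 \<or> QQ K n + K \<le> PP K n"
    unfolding PP_def QQ_def by auto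
  have path: "hc_path K L \<omega>"
    unfolding hc_path_def
  proof (intro conjI allI impI)
    show "\<omega> \<noteq> []" using len by auto
    show "set \<omega> \<subseteq> hc_states K L" using setw conf_valid[OF K0 valid] by auto
  next
    fix i assume "Suc i < length \<omega>"
    then have "\<omega> ! i = conf K L (PP K i) (QQ K i)" "\<omega> ! Suc i = conf K L (PP K (Suc i)) (QQ K (Suc i))"
      using nth len by auto
    then show "card {v \<in> grid K L. (\<omega> ! i) v \<noteq> (\<omega> ! Suc i) v} \<le> 1"
      using step_card[OF PQ_step[of K i], of K L] by simp
  qed
  have KL2: "K*2 \<le> K*L" using assms by (intro mult_le_mono2) auto
  define c where "c = int ((K + 1) div 2) + 1"
  have diffH: "\<And>p q. hc_H K L (conf K L p q) - hc_H K L (even_conf K L) = int (Ec K L p) - int (Oc K L q)"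
    unfolding e_eq H_conf[OF K0] using diff_decomp[of K L] by simp
  have bound: "\<And>n. int (Ec K L (PP K n)) - int (Oc K L (QQ K n)) \<le> c"
  proof -
    fix n
    show "int (Ec K L (PP K n)) - int (Oc K L (QQ K n)) \<le> c"
    proof (cases "n \<le> K")
      case True
      then have "Ec K L (PP K n) \<le> Ec K L K" by (simp add: PP_def Ec_mono)
      then show ?thesis using Ec_K[OF K0 L0] by (simp add: c_def)
    next
      case False
      define a where "a = (n - K + 1) div 2"
      have P: "PP K n = K + a" using False by (simp add: PP_def a_def)
      have Q: "a \<le> Suc (QQ K n)" using False by (simp add: QQ_def a_def)
      have "Ec K L (PP K n) \<le> Ec K L K + Oc K L (QQ K n) + 1"
        using Ec_shift[OF K0, of L a] Oc_step[OF Q, of K L] P by simp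
      then show ?thesis using Ec_K[OF K0 L0] by (simp add: c_def)
    qed
  qed
  have attain: "int (Ec K L (PP K (K+3))) - int (Oc K L (QQ K (K+3))) = c"
  proof -
    have P: "PP K (K+3) = K + 2" by (simp add: PP_def)
    have Q: "QQ K (K+3) = 1" by (simp add: QQ_def)
    have KL: "K + 2 \<le> K*L" using KL2 assms by linarith
    have evK: "\<not> ev K K" using K0 by (simp add: ev_def)
    have d1: "(1+K) div K = 1" using assms div_add_self2[of K 1] by (simp del: div_add_self2)
    have m1: "(1+K) mod K = 1" using assms mod_add_self2[of 1 K] by (simp del: mod_add_self2)
    have evK1: "ev K (K+1)" using d1 m1 by (simp add: ev_def add.commute)
    have ev0: "ev K 0" by (simp add: ev_def)
    have s: "{t. t < K*L \<and> ev K t \<and> t < K + 2} = insert (K+1) {t. t < K*L \<and> ev K t \<and> t < K}"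
      using KL evK evK1 by (auto simp: less_Suc_eq)
    have "Ec K L (K+2) = Ec K L K + 1" unfolding Ec_def s by simp
    moreover have "{t. t < K*L \<and> \<not> ev K t \<and> t < 1} = {}"
    proof (intro equalityI subsetI)
      fix t assume "t \<in> {t. t < K*L \<and> \<not> ev K t \<and> t < 1}"
      then have "t = 0" "\<not> ev K t" by auto
      then show "t \<in> {}" using ev0 by simp
    qed simp
    then have "Oc K L 1 = 0" by (simp add: Oc_def)
    ultimately show ?thesis using P Q Ec_K[OF K0 L0] by (simp add: c_def)
  qed
  have K3: "K + 3 \<le> Nm" using KL2 assms unfolding Nm_def by linarith
  have MaxE: "Max (hc_H K L ` set \<omega>) = hc_H K L (even_conf K L) + c"
  proof (rule Max_eqI)
    show "finite (hc_H K L ` set \<omega>)" by simp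
  next
    fix y assume "y \<in> hc_H K L ` set \<omega>"
    then obtain n where "y = hc_H K L (conf K L (PP K n) (QQ K n))" using setw by auto
    then show "y \<le> hc_H K L (even_conf K L) + c" using diffH[of "PP K n" "QQ K n"] bound[of n]
      by simp
  next
    have "conf K L (PP K (K+3)) (QQ K (K+3)) \<in> set \<omega>" using setw K3 by auto
    moreover have "hc_H K L (conf K L (PP K (K+3)) (QQ K (K+3))) = hc_H K L (even_conf K L) + c"
      using diffH[of "PP K (K+3)" "QQ K (K+3)"] attain by simp
    ultimately show "hc_H K L (even_conf K L) + c \<in> hc_H K L ` set \<omega>" by (metis rev_image_eqI)
  qed
  show ?thesis
    using path hd lastw MaxE ceil_half by (intro exI[of _ \<omega>]) (simp add: c_def)
qed

end
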